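(* For a Galton--Watson fractal model, let $\mu_n(\theta)=\mathbb{E}|\operatorname{proj}_\theta(S_n)|$ and $\mu_n=\mathbb{E}[\operatorname{Fav}(S_n)]=\int_0^\pi\mu_n(\theta)\,d\theta$. For each $\theta$, the sequence $(\mu_n(\theta))_n$ is convex, i.e. $\mu_n(\theta)-\mu_{n+1}(\theta)\le\mu_{n-1}(\theta)-\mu_n(\theta)$ for all $n\ge1$. Consequently the sequence $(\mu_n)_n$ is convex.
   Context: Galton--Watson (GW) fractal model: let $J_0\subset\mathbb{R}^2$ be a compact set equal to the closure of its interior, with finitely many connected components. Let $\mathfrak X=(\mathbf L;h_1(J_0),\dots,h_{\mathbf L}(J_0))$ be a random variable where $\mathbf L\in\{0,1,2,\dots\}$ is bounded, each $h_i$ is a homothety with contraction ratio $\rho\in(0,1)$ and $h_i(J_0)\subset J_0$, and $\mathbb{E}[\mathbf L]=\rho^{-1}$. Set $\mathcal{S}_0=\{J_0\}$, $S_0=J_0$; given $\mathcal{S}_n$, for each $R\in\mathcal{S}_n$ take an independent realization of $\mathfrak X$ (independent of $\mathcal{S}_n$) and let $\mathcal{S}_{n+1}$ consist of the images $g_R(h^R_i(J_0))$ where $g_R$ is the homothety with $g_R(J_0)=R$; $S_{n+1}=\bigcup\mathcal{S}_{n+1}$. $\operatorname{proj}_\theta(x)=\langle x,(-\sin\theta,\cos\theta)\rangle$, $|\cdot|$ is one-dimensional Lebesgue measure, and $\operatorname{Fav}(A)=\int_0^\pi|\operatorname{proj}_\theta A|\,d\theta$. *)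

theory Defs
  imports "HOL-Probability.Probability"
begin

type_synonym pt = "real \<times> real"

definition proj :: "real \<Rightarrow> pt \<Rightarrow> real" where
  "proj \<theta> x = x \<bullet> (- sin \<theta>, cos \<theta>)"

definition len :: "real set \<Rightarrow> real" where
  "len A = measure lebesgue A"

definition Fav :: "pt set \<Rightarrow> real" where
  "Fav A = integral {0..pi} (\<lambda>\<theta>. len (proj \<theta> ` A))"

definition hom :: "real \<Rightarrow> pt \<Rightarrow> pt \<Rightarrow> pt" where
  "hom \<rho> t x = \<rho> *\<^sub>R x + t"

text \<open>The offspring variable of the node with Ulam--Harris address p is
  X p \<omega> = (L, t): L children, child i (i < L) being the image of J0 under
  the homothety hom rho (t i), expressed in the coordinates of the parent.\<close>

definition offspringM :: "(nat \<times> (nat \<Rightarrow> pt)) measure" where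
  "offspringM = count_space UNIV \<Otimes>\<^sub>M (\<Pi>\<^sub>M i\<in>UNIV. borel)"

fun alive :: "(nat list \<Rightarrow> 'w \<Rightarrow> nat \<times> (nat \<Rightarrow> pt)) \<Rightarrow> 'w \<Rightarrow> nat list \<Rightarrow> nat list \<Rightarrow> bool" where
  "alive X \<omega> p [] = True"
| "alive X \<omega> p (i # w) = (i < fst (X p \<omega>) \<and> alive X \<omega> (p @ [i]) w)"

fun gmap :: "real \<Rightarrow> (nat list \<Rightarrow> 'w \<Rightarrow> nat \<times> (nat \<Rightarrow> pt)) \<Rightarrow> 'w \<Rightarrow> nat list \<Rightarrow> nat list \<Rightarrow> pt \<Rightarrow> pt" where
  "gmap \<rho> X \<omega> p [] = id"
| "gmap \<rho> X \<omega> p (i # w) = hom \<rho> (snd (X p \<omega>) i) \<circ> gmap \<rho> X \<omega> (p @ [i]) w"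

definition GW_S :: "real \<Rightarrow> pt set \<Rightarrow> (nat list \<Rightarrow> 'w \<Rightarrow> nat \<times> (nat \<Rightarrow> pt)) \<Rightarrow> nat \<Rightarrow> 'w \<Rightarrow> pt set" where
  "GW_S \<rho> J0 X n \<omega> = (\<Union>w\<in>{w. length w = n \<and> alive X \<omega> [] w}. gmap \<rho> X \<omega> [] w ` J0)"

end

theory Submission
  imports Defs
begin

type_synonym cfg = "nat list \<Rightarrow> nat \<times> (nat \<Rightarrow> pt)"

definition SC :: "real \<Rightarrow> pt set \<Rightarrow> cfg \<Rightarrow> nat \<Rightarrow> pt set" where
  "SC \<rho> J0 c n = GW_S \<rho> J0 (\<lambda>p (_::unit). c p) n ()"

definition sub :: "nat \<Rightarrow> cfg \<Rightarrow> cfg" where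
  "sub i c = (\<lambda>q. c (i # q))"

lemma alive_shift:
  "alive (\<lambda>q (_::unit). c (a @ q)) () r w = alive (\<lambda>q (_::unit). c q) () (a @ r) w"
  by (induction w arbitrary: r) auto

lemma gmap_shift:
  "gmap \<rho> (\<lambda>q (_::unit). c (a @ q)) () r w = gmap \<rho> (\<lambda>q (_::unit). c q) () (a @ r) w"
  by (induction w arbitrary: r) auto

lemma alive_X: "alive X \<omega> p w = alive (\<lambda>q (_::unit). X q \<omega>) () p w"
  by (induction w arbitrary: p) auto

lemma gmap_X: "gmap \<rho> X \<omega> p w = gmap \<rho> (\<lambda>q (_::unit). X q \<omega>) () p w"
  by (induction w arbitrary: p) auto

lemma GW_S_SC: "GW_S \<rho> J0 X n \<omega> = SC \<rho> J0 (\<lambda>p. X p \<omega>) n"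
proof -
  have a: "alive X \<omega> [] w = alive (\<lambda>q (_::unit). X q \<omega>) () [] w" for w by (rule alive_X)
  have g: "gmap \<rho> X \<omega> [] w = gmap \<rho> (\<lambda>q (_::unit). X q \<omega>) () [] w" for w by (rule gmap_X)
  show ?thesis unfolding SC_def GW_S_def by (simp only: a g)
qed

lemma SC_0: "SC \<rho> J0 c 0 = J0"
  unfolding SC_def GW_S_def by auto

lemma SC_Suc: "SC \<rho> J0 c (Suc n) =
   (\<Union>i\<in>{..<fst (c [])}. hom \<rho> (snd (c []) i) ` SC \<rho> J0 (sub i c) n)"
proof -
  have al: "alive (\<lambda>q (_::unit). sub i c q) () [] w = alive (\<lambda>q (_::unit). c q) () [i] w" for i w
    using alive_shift[of c "[i]" "[]" w] by (simp add: sub_def)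
  have gm: "gmap \<rho> (\<lambda>q (_::unit). sub i c q) () [] w = gmap \<rho> (\<lambda>q (_::unit). c q) () [i] w" for i w
    using gmap_shift[of \<rho> c "[i]" "[]" w] by (simp add: sub_def)
  show ?thesis
  proof (rule set_eqI)
    fix x
    show "x \<in> SC \<rho> J0 c (Suc n) \<longleftrightarrow> x \<in> (\<Union>i\<in>{..<fst (c [])}. hom \<rho> (snd (c []) i) ` SC \<rho> J0 (sub i c) n)"
    proof
      assume "x \<in> SC \<rho> J0 c (Suc n)"
      then obtain w y where "length w = Suc n" "alive (\<lambda>p (_::unit). c p) () [] w" "y \<in> J0"
        "x = gmap \<rho> (\<lambda>p (_::unit). c p) () [] w y"
        unfolding SC_def GW_S_def by auto
      then obtain i v where "w = i # v" "length v = n" by (cases w) auto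
      then show "x \<in> (\<Union>i\<in>{..<fst (c [])}. hom \<rho> (snd (c []) i) ` SC \<rho> J0 (sub i c) n)"
        using \<open>alive _ _ _ w\<close> \<open>y \<in> J0\<close> \<open>x = _\<close>
        unfolding SC_def GW_S_def by (auto simp: al gm)
    next
      assume "x \<in> (\<Union>i\<in>{..<fst (c [])}. hom \<rho> (snd (c []) i) ` SC \<rho> J0 (sub i c) n)"
      then obtain i v y where "i < fst (c [])" "length v = n"
         "alive (\<lambda>p (_::unit). c p) () [i] v" "y \<in> J0"
         "x = hom \<rho> (snd (c []) i) (gmap \<rho> (\<lambda>p (_::unit). c p) () [i] v y)"
        unfolding SC_def GW_S_def by (auto simp: al gm)
      then have "length (i # v) = Suc n \<and> alive (\<lambda>p (_::unit). c p) () [] (i # v)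
          \<and> x = gmap \<rho> (\<lambda>p (_::unit). c p) () [] (i # v) y" by simp
      then show "x \<in> SC \<rho> J0 c (Suc n)"
        unfolding SC_def GW_S_def using \<open>y \<in> J0\<close> by blast
    qed
  qed
qed

lemma compact_hom: "compact A \<Longrightarrow> compact (hom \<rho> t ` A)"
  unfolding hom_def by (intro compact_continuous_image continuous_intros)

lemma SC_compact: "compact J0 \<Longrightarrow> compact (SC \<rho> J0 c n)"
proof (induction n arbitrary: c)
  case 0 then show ?case by (simp add: SC_0)
next
  case (Suc n)
  show ?case unfolding SC_Suc[of \<rho> J0 c n]
    by (intro compact_UN finite_lessThan ballI compact_hom Suc.IH Suc.prems)
qed

definition good :: "real \<Rightarrow> pt set \<Rightarrow> cfg \<Rightarrow> bool" where
  "good \<rho> J0 c \<longleftrightarrow> (\<forall>p i. i < fst (c p) \<longrightarrow> hom \<rho> (snd (c p) i) ` J0 \<subseteq> J0)"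

lemma good_sub: "good \<rho> J0 c \<Longrightarrow> good \<rho> J0 (sub i c)"
  unfolding good_def sub_def by blast

lemma SC_mono: "good \<rho> J0 c \<Longrightarrow> SC \<rho> J0 c (Suc n) \<subseteq> SC \<rho> J0 c n"
proof (induction n arbitrary: c)
  case 0 then show ?case unfolding SC_Suc[of \<rho> J0 c 0] SC_0 good_def by blast
next
  case (Suc n)
  have "SC \<rho> J0 (sub i c) (Suc n) \<subseteq> SC \<rho> J0 (sub i c) n" for i
    using Suc.IH[OF good_sub[OF Suc.prems]] .
  then show ?case
    unfolding SC_Suc[of \<rho> J0 c "Suc n"] SC_Suc[of \<rho> J0 c n]
    by (intro UN_mono order.refl image_mono)
qed

lemma SC_J0: "good \<rho> J0 c \<Longrightarrow> SC \<rho> J0 c n \<subseteq> J0"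
proof (induction n)
  case 0 then show ?case by (simp add: SC_0)
next
  case (Suc n) then show ?case using SC_mono[of \<rho> J0 c n] by blast
qed

lemma proj_hom: "proj \<theta> ` hom \<rho> t ` A = (\<lambda>x. \<rho> *\<^sub>R x + proj \<theta> t) ` proj \<theta> ` A"
  unfolding proj_def hom_def image_image by (simp add: inner_add_left)

lemma len_hom: "len (proj \<theta> ` hom \<rho> t ` A) = \<bar>\<rho>\<bar> * len (proj \<theta> ` A)"
  unfolding proj_hom len_def using measure_lebesgue_affine[of \<rho> "proj \<theta> t" "proj \<theta> ` A"] by simp

lemma continuous_proj: "continuous_on A (proj \<theta>)"
  unfolding proj_def by (intro continuous_intros)

lemma compact_proj: "compact A \<Longrightarrow> compact (proj \<theta> ` A)"
  by (intro compact_continuous_image continuous_proj)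

lemma key_ineq:
  assumes J0: "compact J0" and g: "good \<rho> J0 c" and rho: "0 < \<rho>"
  shows "len (proj \<theta> ` SC \<rho> J0 c (Suc m)) - len (proj \<theta> ` SC \<rho> J0 c (Suc (Suc m)))
     \<le> \<rho> * (\<Sum>i<fst (c []). len (proj \<theta> ` SC \<rho> J0 (sub i c) m) - len (proj \<theta> ` SC \<rho> J0 (sub i c) (Suc m)))"
proof -
  define L where "L = fst (c [])"
  define Ai where "Ai i = proj \<theta> ` hom \<rho> (snd (c []) i) ` SC \<rho> J0 (sub i c) m" for i
  define Bi where "Bi i = proj \<theta> ` hom \<rho> (snd (c []) i) ` SC \<rho> J0 (sub i c) (Suc m)" for i
  define A where "A = proj \<theta> ` SC \<rho> J0 c (Suc m)"
  define B where "B = proj \<theta> ` SC \<rho> J0 c (Suc (Suc m))"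
  have A: "A = (\<Union>i<L. Ai i)" unfolding A_def Ai_def L_def by (subst SC_Suc) auto
  have B: "B = (\<Union>i<L. Bi i)" unfolding B_def Bi_def L_def by (subst SC_Suc) auto
  have cA: "compact A" "compact B" unfolding A_def B_def by (auto intro!: compact_proj SC_compact J0)
  have cAi: "compact (Ai i)" "compact (Bi i)" for i
    unfolding Ai_def Bi_def by (auto intro!: compact_proj compact_hom SC_compact J0)
  have fm: "Ai i \<in> fmeasurable lebesgue" "Bi i \<in> fmeasurable lebesgue" for i
    using cAi lmeasurable_compact by blast+
  have BA: "B \<subseteq> A" unfolding A_def B_def using SC_mono[OF g] by blast
  have BAi: "Bi i \<subseteq> Ai i" for i
    unfolding Ai_def Bi_def using SC_mono[OF good_sub[OF g]] by blast
  have "len A - len B = measure lebesgue (A - B)"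
    unfolding len_def using cA BA
    by (intro measurable_measure_Diff[symmetric] fmeasurableD lmeasurable_compact)
  also have "\<dots> \<le> measure lebesgue (\<Union>i<L. Ai i - Bi i)"
  proof (rule measure_mono_fmeasurable)
    show "A - B \<subseteq> (\<Union>i<L. Ai i - Bi i)" unfolding A B by blast
    show "A - B \<in> sets lebesgue" using cA
      by (intro sets.Diff fmeasurableD lmeasurable_compact)
    show "(\<Union>i<L. Ai i - Bi i) \<in> fmeasurable lebesgue"
      using fm by (intro fmeasurable.finite_UN finite_lessThan fmeasurable_Diff fmeasurableD)
  qed
  also have "\<dots> \<le> (\<Sum>i<L. measure lebesgue (Ai i - Bi i))"
    using fm by (intro measure_UNION_le finite_lessThan sets.Diff fmeasurableD)
  also have "\<dots> = (\<Sum>i<L. len (Ai i) - len (Bi i))"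
    unfolding len_def using fm BAi
    by (intro sum.cong refl measurable_measure_Diff fmeasurableD)
  also have "\<dots> = \<rho> * (\<Sum>i<L. len (proj \<theta> ` SC \<rho> J0 (sub i c) m) - len (proj \<theta> ` SC \<rho> J0 (sub i c) (Suc m)))"
    unfolding Ai_def Bi_def len_hom using rho by (simp add: sum_distrib_left algebra_simps)
  finally show ?thesis unfolding A_def B_def L_def .
qed

abbreviation CM :: "cfg measure" where
  "CM \<equiv> PiM UNIV (\<lambda>_::nat list. offspringM)"

lemma space_offspringM[simp]: "space offspringM = UNIV"
  unfolding offspringM_def by (simp add: space_pair_measure space_PiM PiE_UNIV_domain)

lemma space_CM[simp]: "space CM = UNIV"
  by (simp add: space_PiM PiE_UNIV_domain)

fun tau :: "real \<Rightarrow> cfg \<Rightarrow> nat list \<Rightarrow> nat list \<Rightarrow> pt" where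
  "tau \<rho> c p [] = 0"
| "tau \<rho> c p (i # w) = \<rho> *\<^sub>R tau \<rho> c (p @ [i]) w + snd (c p) i"

lemma gmap_tau: "gmap \<rho> (\<lambda>q (_::unit). c q) () p w y = \<rho> ^ length w *\<^sub>R y + tau \<rho> c p w"
  by (induction w arbitrary: p) (auto simp: hom_def algebra_simps)

lemma meas_fst_c[measurable]: "(\<lambda>c::cfg. fst (c p)) \<in> measurable CM (count_space UNIV)"
  unfolding offspringM_def by measurable

lemma meas_snd_c[measurable]: "(\<lambda>c::cfg. snd (c p) i) \<in> borel_measurable CM"
  unfolding offspringM_def by measurable

lemma meas_tau[measurable]: "(\<lambda>c. tau \<rho> c p w) \<in> borel_measurable CM"
  by (induction w arbitrary: p) auto

lemma meas_alive[measurable]: "(\<lambda>c. alive (\<lambda>q (_::unit). c q) () p w) \<in> measurable CM (count_space UNIV)"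
  by (induction w arbitrary: p) auto

definition Zset :: "pt set \<Rightarrow> (real \<times> real) set" where
  "Zset J0 = {(\<theta>, z). \<exists>y\<in>J0. z = proj \<theta> y}"

lemma closed_Zset: "compact J0 \<Longrightarrow> closed (Zset J0)"
proof -
  assume J0: "compact J0"
  have "closed {v. \<exists>y. y \<in> J0 \<and> (y, v) \<in> {(y, (\<theta>::real, z::real)). z = proj \<theta> y}}"
  proof (rule closed_compact_projection[OF J0])
    have "{(y, (\<theta>::real, z::real)). z = proj \<theta> y} = {u. snd (snd u) = proj (fst (snd u)) (fst u)}"
      by auto
    also have "closed \<dots>"
      unfolding proj_def by (intro closed_Collect_eq continuous_intros)
    finally show "closed {(y, (\<theta>::real, z::real)). z = proj \<theta> y}" .
  qed
  also have "{v. \<exists>y. y \<in> J0 \<and> (y, v) \<in> {(y, (\<theta>::real, z::real)). z = proj \<theta> y}} = Zset J0"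
    unfolding Zset_def by auto
  finally show ?thesis .
qed

lemma borel_Zset[measurable]: "compact J0 \<Longrightarrow> Zset J0 \<in> sets borel"
  using closed_Zset by (rule borel_closed)

lemma proj_scale_add: "proj \<theta> (a *\<^sub>R y + t) = a * proj \<theta> y + proj \<theta> t"
  unfolding proj_def by (simp add: inner_add_left)

definition Qset :: "real \<Rightarrow> pt set \<Rightarrow> nat \<Rightarrow> ((real \<times> cfg) \<times> real) set" where
  "Qset \<rho> J0 k = {((\<theta>, c), x). \<exists>w. length w = k \<and> alive (\<lambda>q (_::unit). c q) () [] w \<and>
       (\<theta>, (x - proj \<theta> (tau \<rho> c [] w)) / \<rho> ^ k) \<in> Zset J0}"

lemma Qset_section:
  assumes "\<rho> \<noteq> 0"
  shows "Pair (\<theta>, c) -` Qset \<rho> J0 k = proj \<theta> ` SC \<rho> J0 c k"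
proof (rule set_eqI)
  fix x
  have "x \<in> proj \<theta> ` SC \<rho> J0 c k \<longleftrightarrow> (\<exists>w. length w = k \<and> alive (\<lambda>q (_::unit). c q) () [] w \<and>
          (\<exists>y\<in>J0. x = proj \<theta> (gmap \<rho> (\<lambda>q (_::unit). c q) () [] w y)))"
    unfolding SC_def GW_S_def by blast
  also have "\<dots> \<longleftrightarrow> (\<exists>w. length w = k \<and> alive (\<lambda>q (_::unit). c q) () [] w \<and>
       (\<theta>, (x - proj \<theta> (tau \<rho> c [] w)) / \<rho> ^ k) \<in> Zset J0)"
  proof -
    have "(\<exists>y\<in>J0. x = proj \<theta> (gmap \<rho> (\<lambda>q (_::unit). c q) () [] w y)) \<longleftrightarrow>
          (\<theta>, (x - proj \<theta> (tau \<rho> c [] w)) / \<rho> ^ k) \<in> Zset J0" if "length w = k" for w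
      using assms that unfolding gmap_tau proj_scale_add Zset_def
      by (auto simp: field_simps)
    then show ?thesis by blast
  qed
  finally show "x \<in> Pair (\<theta>, c) -` Qset \<rho> J0 k \<longleftrightarrow> x \<in> proj \<theta> ` SC \<rho> J0 c k"
    unfolding Qset_def by simp
qed

lemma Qset_sets:
  assumes "compact J0"
  shows "Qset \<rho> J0 k \<in> sets ((borel \<Otimes>\<^sub>M CM) \<Otimes>\<^sub>M lborel)"
proof -
  have [measurable]: "Zset J0 \<in> sets borel" using assms by (rule borel_Zset)
  have "Qset \<rho> J0 k = {u \<in> space ((borel \<Otimes>\<^sub>M CM) \<Otimes>\<^sub>M lborel). \<exists>w. length w = k \<and>
       alive (\<lambda>q (_::unit). snd (fst u) q) () [] w \<and>
       (fst (fst u), (snd u - proj (fst (fst u)) (tau \<rho> (snd (fst u)) [] w)) / \<rho> ^ k) \<in> Zset J0}"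
    unfolding Qset_def by (auto simp: space_pair_measure)
  also have "\<dots> \<in> sets ((borel \<Otimes>\<^sub>M CM) \<Otimes>\<^sub>M lborel)"
    unfolding proj_def by measurable
  finally show ?thesis .
qed

lemma meas_len:
  assumes J0: "compact J0" and rho: "\<rho> \<noteq> 0"
  shows "(\<lambda>u. len (proj (fst u) ` SC \<rho> J0 (snd u) k)) \<in> borel_measurable (borel \<Otimes>\<^sub>M CM)"
proof -
  have m: "(\<lambda>u. emeasure lborel (Pair u -` Qset \<rho> J0 k)) \<in> borel_measurable (borel \<Otimes>\<^sub>M CM)"
    by (rule lborel.measurable_emeasure_Pair[OF Qset_sets[OF J0]])
  have eq: "len (proj (fst u) ` SC \<rho> J0 (snd u) k) = enn2real (emeasure lborel (Pair u -` Qset \<rho> J0 k))" for u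
  proof -
    obtain \<theta> c where u: "u = (\<theta>, c)" by (cases u)
    have "compact (proj \<theta> ` SC \<rho> J0 c k)" by (intro compact_proj SC_compact J0)
    then have "proj \<theta> ` SC \<rho> J0 c k \<in> sets lborel"
      by (simp add: borel_compact)
    then show ?thesis unfolding u len_def Qset_section[OF rho]
      by (simp add: measure_def[symmetric])
  qed
  show ?thesis unfolding eq using m by measurable
qed

lemma meas_sub[measurable]: "sub i \<in> measurable CM CM"
proof -
  have "(\<lambda>c. \<lambda>q\<in>UNIV. c (i # q)) \<in> measurable CM CM"
    by (intro measurable_restrict measurable_component_singleton) simp
  then show ?thesis unfolding sub_def restrict_UNIV .
qed

lemma g_meas:
  assumes J0: "compact J0" and rho: "\<rho> \<noteq> 0"
  shows "(\<lambda>c. len (proj \<theta> ` SC \<rho> J0 c k)) \<in> borel_measurable CM"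
proof -
  have "(\<lambda>c::cfg. (\<theta>, c)) \<in> measurable CM (borel \<Otimes>\<^sub>M CM)" by measurable
  from measurable_compose[OF this meas_len[OF J0 rho, of k]] show ?thesis by simp
qed

lemma g_bound:
  assumes J0: "compact J0" and g: "good \<rho> J0 c"
  shows "0 \<le> len (proj \<theta> ` SC \<rho> J0 c k)" "len (proj \<theta> ` SC \<rho> J0 c k) \<le> len (proj \<theta> ` J0)"
proof -
  show "0 \<le> len (proj \<theta> ` SC \<rho> J0 c k)" unfolding len_def by simp
  have "proj \<theta> ` SC \<rho> J0 c k \<in> sets lebesgue"
    by (intro fmeasurableD lmeasurable_compact compact_proj SC_compact J0)
  moreover have "proj \<theta> ` J0 \<in> fmeasurable lebesgue"
    by (intro lmeasurable_compact compact_proj J0)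
  moreover have "proj \<theta> ` SC \<rho> J0 c k \<subseteq> proj \<theta> ` J0" using SC_J0[OF g] by blast
  ultimately show "len (proj \<theta> ` SC \<rho> J0 c k) \<le> len (proj \<theta> ` J0)"
    unfolding len_def by (intro measure_mono_fmeasurable)
qed

lemma sum_less_B:
  fixes h :: "nat \<Rightarrow> real"
  assumes "L \<le> B"
  shows "(\<Sum>i<L. h i) = (\<Sum>i<B. (if i < L then 1 else 0) * h i)"
proof -
  have "(\<Sum>i<B. (if i < L then 1 else 0) * h i) = (\<Sum>i<B. if i < L then h i else 0)"
    by (intro sum.cong) auto
  also have "\<dots> = (\<Sum>i\<in>{x \<in> {..<B}. x < L}. h i)"
    by (rule sum.inter_filter[symmetric]) simp
  also have "{x \<in> {..<B}. x < L} = {..<L}" using assms by auto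
  finally show ?thesis by simp
qed

context prob_space
begin

lemma theta_convex:
  fixes X :: "nat list \<Rightarrow> 'a \<Rightarrow> nat \<times> (nat \<Rightarrow> pt)"
  assumes J0: "compact J0" and rho: "0 < \<rho>"
    and Xm: "\<And>p. X p \<in> measurable M offspringM"
    and Xd: "\<And>p. distr M offspringM (X p) = distr M offspringM (X [])"
    and Xi: "indep_vars (\<lambda>_. offspringM) X UNIV"
    and Bd: "\<And>p \<omega>. \<omega> \<in> space M \<Longrightarrow> fst (X p \<omega>) \<le> B"
    and H: "\<And>p \<omega> i. \<omega> \<in> space M \<Longrightarrow> i < fst (X p \<omega>) \<Longrightarrow> hom \<rho> (snd (X p \<omega>) i) ` J0 \<subseteq> J0"
    and EL: "expectation (\<lambda>\<omega>. real (fst (X [] \<omega>))) = 1 / \<rho>"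
  shows "expectation (\<lambda>\<omega>. len (proj \<theta> ` GW_S \<rho> J0 X (Suc m) \<omega>))
           - expectation (\<lambda>\<omega>. len (proj \<theta> ` GW_S \<rho> J0 X (Suc (Suc m)) \<omega>))
         \<le> expectation (\<lambda>\<omega>. len (proj \<theta> ` GW_S \<rho> J0 X m \<omega>))
           - expectation (\<lambda>\<omega>. len (proj \<theta> ` GW_S \<rho> J0 X (Suc m) \<omega>))"
proof -
  define conf where "conf \<omega> = (\<lambda>p. X p \<omega>)" for \<omega>
  define g where "g k c = len (proj \<theta> ` SC \<rho> J0 c k)" for k c
  define a where "a k = expectation (\<lambda>\<omega>. g k (conf \<omega>))" for k
  define ind where "ind i \<omega> = (if i < fst (X [] \<omega>) then 1 else 0 :: real)" for i \<omega>
  define D where "D = distr M offspringM (X [])"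
  have rho0: "\<rho> \<noteq> 0" using rho by simp
  have gm[measurable]: "g k \<in> borel_measurable CM" for k
    unfolding g_def[abs_def] using g_meas[OF J0 rho0] .
  have confm[measurable]: "conf \<in> measurable M CM"
    using measurable_restrict[of UNIV X M "\<lambda>_. offspringM"] Xm unfolding conf_def restrict_UNIV by simp
  have good: "good \<rho> J0 (conf \<omega>)" if "\<omega> \<in> space M" for \<omega>
    using H[OF that] unfolding good_def conf_def by blast
  have Xfst[measurable]: "(\<lambda>\<omega>. fst (X p \<omega>)) \<in> measurable M (count_space UNIV)" for p
    using Xm[of p] unfolding offspringM_def by measurable
  have indm[measurable]: "ind i \<in> borel_measurable M" for i
    unfolding ind_def[abs_def] by measurable
  have lhs_eq: "expectation (\<lambda>\<omega>. len (proj \<theta> ` GW_S \<rho> J0 X k \<omega>)) = a k" for k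
    unfolding a_def g_def conf_def GW_S_SC ..
  have probD: "prob_space D" unfolding D_def by (intro prob_space_distr Xm)
  have dconf: "distr M CM conf = PiM UNIV (\<lambda>_. D)"
  proof -
    have ne: "(UNIV :: nat list set) \<noteq> {}" by simp
    have "distr M (\<Pi>\<^sub>M i\<in>UNIV. offspringM) (\<lambda>x. \<lambda>i\<in>UNIV. X i x) = (\<Pi>\<^sub>M i\<in>UNIV. distr M offspringM (X i))"
      using iffD1[OF indep_vars_iff_distr_eq_PiM[where I=UNIV and M'="\<lambda>_. offspringM" and X=X, OF ne Xm] Xi] .
    moreover have "(\<lambda>i. distr M offspringM (X i)) = (\<lambda>_. D)" unfolding D_def by (rule ext, rule Xd)
    ultimately show ?thesis unfolding conf_def[abs_def] restrict_UNIV by simp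
  qed
  have dsub: "distr M CM (\<lambda>\<omega>. sub i (conf \<omega>)) = PiM UNIV (\<lambda>_. D)" for i
  proof -
    have "distr M CM (\<lambda>\<omega>. sub i (conf \<omega>)) = distr (distr M CM conf) CM (sub i)"
      by (subst distr_distr) (auto simp: comp_def)
    also have "\<dots> = distr (PiM UNIV (\<lambda>_. D)) (PiM UNIV (\<lambda>_. D)) (\<lambda>\<omega>. \<lambda>n\<in>UNIV. \<omega> (i # n))"
      unfolding dconf
      by (intro distr_cong refl sets_PiM_cong) (auto simp: D_def sub_def)
    also have "\<dots> = PiM UNIV (\<lambda>_. D)"
      using distr_PiM_reindex[where K=UNIV and M="\<lambda>_. D" and I=UNIV and f="(#) i"] probD by simp
    finally show ?thesis .
  qed
  have shift: "expectation (\<lambda>\<omega>. G (sub i (conf \<omega>))) = expectation (\<lambda>\<omega>. G (conf \<omega>))"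
    if [measurable]: "G \<in> borel_measurable CM" for G :: "cfg \<Rightarrow> real" and i
  proof -
    have "expectation (\<lambda>\<omega>. G (sub i (conf \<omega>))) = integral\<^sup>L (distr M CM (\<lambda>\<omega>. sub i (conf \<omega>))) G"
      by (subst integral_distr) auto
    also have "\<dots> = integral\<^sup>L (distr M CM conf) G" unfolding dsub dconf ..
    also have "\<dots> = expectation (\<lambda>\<omega>. G (conf \<omega>))"
      by (subst integral_distr) auto
    finally show ?thesis .
  qed
  define K where "K = len (proj \<theta> ` J0)"
  have gb: "\<bar>g k c\<bar> \<le> K" if "good \<rho> J0 c" for k c
    using g_bound[OF J0 that] unfolding g_def K_def by simp
  have int_conf: "integrable M (\<lambda>\<omega>. g k (conf \<omega>))" for k
    by (intro integrable_const_bound[where B=K] AE_I2) (auto simp: good gb)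
  have int_sub: "integrable M (\<lambda>\<omega>. g k (sub i (conf \<omega>)))" for k i
    by (intro integrable_const_bound[where B=K] AE_I2) (auto simp: good good_sub gb)
  have int_ind: "integrable M (ind i)" for i
    by (intro integrable_const_bound[where B=1] AE_I2) (auto simp: ind_def)
  have indep: "expectation (\<lambda>\<omega>. ind i \<omega> * G (sub i (conf \<omega>))) = expectation (ind i) * expectation (\<lambda>\<omega>. G (sub i (conf \<omega>)))"
    if [measurable]: "G \<in> borel_measurable CM" and intG: "integrable M (\<lambda>\<omega>. G (sub i (conf \<omega>)))"
    for G :: "cfg \<Rightarrow> real" and i
  proof -
    have iv: "indep_var (PiM {[]} (\<lambda>_. offspringM)) (\<lambda>\<omega>. restrict (\<lambda>p. X p \<omega>) {[]})
                 (PiM (range ((#) i)) (\<lambda>_. offspringM)) (\<lambda>\<omega>. restrict (\<lambda>p. X p \<omega>) (range ((#) i)))"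
      by (rule indep_var_restrict[OF Xi]) auto
    define Y1 where "Y1 r = (if i < fst (r []) then 1 else 0 :: real)" for r :: cfg
    define Y2 where "Y2 r = G (\<lambda>q. r (i # q))" for r :: cfg
    have c1: "(\<lambda>r::cfg. r []) \<in> measurable (PiM {[]} (\<lambda>_. offspringM)) offspringM"
      by (rule measurable_component_singleton) simp
    have c1': "(\<lambda>r::cfg. fst (r [])) \<in> measurable (PiM {[]} (\<lambda>_. offspringM)) (count_space UNIV)"
    proof (rule measurable_compose[OF c1])
      show "fst \<in> measurable offspringM (count_space UNIV)" unfolding offspringM_def by (rule measurable_fst)
    qed
    have Y1m: "Y1 \<in> borel_measurable (PiM {[]} (\<lambda>_. offspringM))"
      unfolding Y1_def[abs_def] using c1' by measurable
    have c2: "(\<lambda>r::cfg. \<lambda>q\<in>UNIV. r (i # q)) \<in> measurable (PiM (range ((#) i)) (\<lambda>_. offspringM)) CM"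
      by (intro measurable_restrict measurable_component_singleton) auto
    have Y2m: "Y2 \<in> borel_measurable (PiM (range ((#) i)) (\<lambda>_. offspringM))"
      using measurable_compose[OF c2 that(1)] unfolding Y2_def[abs_def] restrict_UNIV .
    have iv2: "indep_var borel (Y1 \<circ> (\<lambda>\<omega>. restrict (\<lambda>p. X p \<omega>) {[]}))
                 borel (Y2 \<circ> (\<lambda>\<omega>. restrict (\<lambda>p. X p \<omega>) (range ((#) i))))"
      by (rule indep_var_compose[OF iv Y1m Y2m])
    have e1: "Y1 \<circ> (\<lambda>\<omega>. restrict (\<lambda>p. X p \<omega>) {[]}) = ind i"
      by (simp add: fun_eq_iff Y1_def ind_def)
    have e2: "Y2 \<circ> (\<lambda>\<omega>. restrict (\<lambda>p. X p \<omega>) (range ((#) i))) = (\<lambda>\<omega>. G (sub i (conf \<omega>)))"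
      by (simp add: fun_eq_iff Y2_def sub_def conf_def)
    show ?thesis
      using indep_var_lebesgue_integral[OF iv2[unfolded e1 e2] int_ind intG] .
  qed
  have ELsum: "(\<Sum>i<B. expectation (ind i)) = 1 / \<rho>"
  proof -
    have "(\<Sum>i<B. expectation (ind i)) = expectation (\<lambda>\<omega>. \<Sum>i<B. ind i \<omega>)"
      using int_ind by (simp add: Bochner_Integration.integral_sum)
    also have "\<dots> = expectation (\<lambda>\<omega>. real (fst (X [] \<omega>)))"
    proof (rule Bochner_Integration.integral_cong[OF refl])
      fix \<omega> assume "\<omega> \<in> space M"
      then have "fst (X [] \<omega>) \<le> B" by (rule Bd)
      then show "(\<Sum>i<B. ind i \<omega>) = real (fst (X [] \<omega>))"
        using sum_less_B[of "fst (X [] \<omega>)" B "\<lambda>_. 1"] by (simp add: ind_def)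
    qed
    finally show ?thesis using EL by simp
  qed
  define G where "G c = g m c - g (Suc m) c" for c
  have Gm[measurable]: "G \<in> borel_measurable CM" unfolding G_def[abs_def] by measurable
  have intG: "integrable M (\<lambda>\<omega>. G (sub i (conf \<omega>)))" for i
    unfolding G_def using int_sub by auto
  have intIG: "integrable M (\<lambda>\<omega>. ind i \<omega> * G (sub i (conf \<omega>)))" for i
    by (rule Bochner_Integration.integrable_bound[OF intG[of i]]) (auto simp: ind_def)
  have pw: "g (Suc m) (conf \<omega>) - g (Suc (Suc m)) (conf \<omega>)
      \<le> (\<Sum>i<B. \<rho> * (ind i \<omega> * G (sub i (conf \<omega>))))" if "\<omega> \<in> space M" for \<omega>
  proof -
    have "g (Suc m) (conf \<omega>) - g (Suc (Suc m)) (conf \<omega>)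
        \<le> \<rho> * (\<Sum>i<fst (conf \<omega> []). G (sub i (conf \<omega>)))"
      using key_ineq[OF J0 good[OF that] rho, of \<theta> m] unfolding g_def G_def .
    also have "(\<Sum>i<fst (conf \<omega> []). G (sub i (conf \<omega>))) = (\<Sum>i<B. ind i \<omega> * G (sub i (conf \<omega>)))"
      using sum_less_B[of "fst (X [] \<omega>)" B] Bd[OF that] unfolding conf_def ind_def by simp
    finally show ?thesis by (simp add: sum_distrib_left)
  qed
  have "a (Suc m) - a (Suc (Suc m)) = expectation (\<lambda>\<omega>. g (Suc m) (conf \<omega>) - g (Suc (Suc m)) (conf \<omega>))"
    unfolding a_def using int_conf by (simp add: Bochner_Integration.integral_diff)
  also have "\<dots> \<le> expectation (\<lambda>\<omega>. \<Sum>i<B. \<rho> * (ind i \<omega> * G (sub i (conf \<omega>))))"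
  proof (rule integral_mono)
    show "integrable M (\<lambda>\<omega>. g (Suc m) (conf \<omega>) - g (Suc (Suc m)) (conf \<omega>))" using int_conf by auto
    show "integrable M (\<lambda>\<omega>. \<Sum>i<B. \<rho> * (ind i \<omega> * G (sub i (conf \<omega>))))"
      using intIG by (intro Bochner_Integration.integrable_sum integrable_mult_right)
    show "g (Suc m) (conf \<omega>) - g (Suc (Suc m)) (conf \<omega>)
      \<le> (\<Sum>i<B. \<rho> * (ind i \<omega> * G (sub i (conf \<omega>))))" if "\<omega> \<in> space M" for \<omega>
      using that by (rule pw)
  qed
  also have "\<dots> = (\<Sum>i<B. \<rho> * (expectation (ind i) * expectation (\<lambda>\<omega>. G (sub i (conf \<omega>)))))"
  proof -
    from intIG show ?thesis
      by (simp add: Bochner_Integration.integral_sum indep[OF Gm intG])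
  qed
  also have "\<dots> = (\<Sum>i<B. \<rho> * (expectation (ind i) * (a m - a (Suc m))))"
  proof -
    have e: "expectation (\<lambda>\<omega>. G (conf \<omega>)) = a m - a (Suc m)"
      unfolding a_def G_def using int_conf by (simp add: Bochner_Integration.integral_diff)
    have "expectation (\<lambda>\<omega>. G (sub i (conf \<omega>))) = a m - a (Suc m)" for i
      using shift[OF Gm, of i] e by simp
    then show ?thesis by simp
  qed
  also have "\<dots> = \<rho> * (a m - a (Suc m)) * (\<Sum>i<B. expectation (ind i))"
    by (simp add: sum_distrib_left mult.commute mult.left_commute)
  also have "\<dots> = a m - a (Suc m)" using ELsum rho by simp
  finally show ?thesis unfolding lhs_eq .
qed

end

lemma len_J0_bound:
  assumes J0: "compact J0"
  obtains R where "R \<ge> 0" "\<And>\<theta>. len (proj \<theta> ` J0) \<le> 2 * R"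
proof -
  obtain R where R: "\<And>x. x \<in> J0 \<Longrightarrow> norm x \<le> R" "R \<ge> 0"
    using compact_imp_bounded[OF J0] unfolding bounded_iff
    by (metis norm_ge_zero order.trans linorder_le_cases)
  have "len (proj \<theta> ` J0) \<le> 2 * R" for \<theta>
  proof -
    have nv: "norm (- sin \<theta>, cos \<theta>) = 1"
      by (simp add: norm_Pair)
    have sub: "proj \<theta> ` J0 \<subseteq> {-R..R}"
    proof
      fix z assume "z \<in> proj \<theta> ` J0"
      then obtain x where x: "x \<in> J0" "z = proj \<theta> x" by blast
      have "\<bar>z\<bar> \<le> norm x * norm (- sin \<theta>, cos \<theta>)"
        unfolding x proj_def by (rule Cauchy_Schwarz_ineq2)
      also have "\<dots> \<le> R" using R(1)[OF x(1)] nv by simp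
      finally show "z \<in> {-R..R}" by auto
    qed
    have "len (proj \<theta> ` J0) \<le> measure lebesgue {-R..R}"
      unfolding len_def
      by (intro measure_mono_fmeasurable sub fmeasurableD lmeasurable_compact compact_proj J0)
         (simp add: lmeasurable_compact)
    also have "measure lebesgue {-R..R} = measure lborel {-R..R}"
      by (rule measure_completion) simp
    also have "\<dots> = 2 * R" using R(2) by simp
    finally show ?thesis .
  qed
  with R(2) show ?thesis using that by blast
qed

context prob_space
begin

lemma mu_rep:
  fixes X :: "nat list \<Rightarrow> 'a \<Rightarrow> nat \<times> (nat \<Rightarrow> pt)"
  assumes J0: "compact J0" and rho: "0 < \<rho>"
    and Xm: "\<And>p. X p \<in> measurable M offspringM"
    and H: "\<And>p \<omega> i. \<omega> \<in> space M \<Longrightarrow> i < fst (X p \<omega>) \<Longrightarrow> hom \<rho> (snd (X p \<omega>) i) ` J0 \<subseteq> J0"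
  shows "expectation (\<lambda>\<omega>. Fav (GW_S \<rho> J0 X k \<omega>))
           = (LINT \<theta>:{0..pi}|lborel. expectation (\<lambda>\<omega>. len (proj \<theta> ` GW_S \<rho> J0 X k \<omega>)))"
    and "set_integrable lborel {0..pi} (\<lambda>\<theta>. expectation (\<lambda>\<omega>. len (proj \<theta> ` GW_S \<rho> J0 X k \<omega>)))"
proof -
  define conf where "conf \<omega> = (\<lambda>p. X p \<omega>)" for \<omega>
  define h where "h u = len (proj (fst u) ` SC \<rho> J0 (snd u) k)" for u
  have rho0: "\<rho> \<noteq> 0" using rho by simp
  have hm[measurable]: "h \<in> borel_measurable (borel \<Otimes>\<^sub>M CM)"
    unfolding h_def[abs_def] using meas_len[OF J0 rho0] .
  have confm[measurable]: "conf \<in> measurable M CM"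
    using measurable_restrict[of UNIV X M "\<lambda>_. offspringM"] Xm unfolding conf_def restrict_UNIV by simp
  have good: "good \<rho> J0 (conf \<omega>)" if "\<omega> \<in> space M" for \<omega>
    using H[OF that] unfolding good_def conf_def by blast
  obtain R where R: "R \<ge> 0" "\<And>\<theta>. len (proj \<theta> ` J0) \<le> 2 * R"
    using len_J0_bound[OF J0] by blast
  have hb: "\<bar>h (\<theta>, conf \<omega>)\<bar> \<le> 2 * R" if "\<omega> \<in> space M" for \<theta> \<omega>
    using g_bound[OF J0 good[OF that], of \<theta> k] R(2)[of \<theta>] unfolding h_def by simp
  define F where "F \<theta> \<omega> = indicator {0..pi} \<theta> *\<^sub>R h (\<theta>, conf \<omega>)" for \<theta> \<omega>
  interpret P: pair_sigma_finite lborel M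
    by (intro pair_sigma_finite.intro lborel.sigma_finite_measure_axioms sigma_finite_measure_axioms)
  have Fm: "(\<lambda>u. h (fst u, conf (snd u))) \<in> borel_measurable (lborel \<Otimes>\<^sub>M M)"
    by measurable
  have intF: "integrable (lborel \<Otimes>\<^sub>M M) (case_prod F)"
  proof -
    have "integrable (lborel \<Otimes>\<^sub>M M) (\<lambda>u. indicator ({0..pi} \<times> space M) u *\<^sub>R h (fst u, conf (snd u)))"
    proof (rule integrableI_bounded_set_indicator[where B="2 * R"])
      show "{0..pi} \<times> space M \<in> sets (lborel \<Otimes>\<^sub>M M)" by simp
      show "(\<lambda>u. h (fst u, conf (snd u))) \<in> borel_measurable (lborel \<Otimes>\<^sub>M M)" by (rule Fm)
      show "emeasure (lborel \<Otimes>\<^sub>M M) ({0..pi} \<times> space M) < \<infinity>"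
        by (subst emeasure_pair_measure_Times) (auto simp: emeasure_space_1 ennreal_mult_less_top)
      show "AE x in lborel \<Otimes>\<^sub>M M. x \<in> {0..pi} \<times> space M \<longrightarrow> norm (h (fst x, conf (snd x))) \<le> 2 * R"
        by (intro AE_I2) (auto intro: hb)
    qed
    moreover have "integrable (lborel \<Otimes>\<^sub>M M) (\<lambda>u. indicator ({0..pi} \<times> space M) u *\<^sub>R h (fst u, conf (snd u)))
        \<longleftrightarrow> integrable (lborel \<Otimes>\<^sub>M M) (case_prod F)"
      by (rule Bochner_Integration.integrable_cong[OF refl])
         (auto simp: F_def space_pair_measure indicator_def)
    ultimately show ?thesis by simp
  qed
  have inner1: "(\<integral>\<theta>. F \<theta> \<omega> \<partial>lborel) = Fav (GW_S \<rho> J0 X k \<omega>)" if "\<omega> \<in> space M" for \<omega>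
  proof -
    have hm1: "(\<lambda>\<theta>. h (\<theta>, conf \<omega>)) \<in> borel_measurable lborel" by measurable
    have si: "set_integrable lborel {0..pi} (\<lambda>\<theta>. h (\<theta>, conf \<omega>))"
      unfolding set_integrable_def
      by (rule integrableI_bounded_set_indicator[where B="2 * R"])
         (auto intro!: hm1 AE_I2 hb[OF that])
    have "(\<integral>\<theta>. F \<theta> \<omega> \<partial>lborel) = (LINT \<theta>:{0..pi}|lborel. h (\<theta>, conf \<omega>))"
      unfolding F_def set_lebesgue_integral_def ..
    also have "\<dots> = integral {0..pi} (\<lambda>\<theta>. h (\<theta>, conf \<omega>))"
      by (rule set_borel_integral_eq_integral(2)[OF si])
    also have "\<dots> = Fav (GW_S \<rho> J0 X k \<omega>)"
      unfolding Fav_def h_def GW_S_SC conf_def by simp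
    finally show ?thesis .
  qed
  have inner2: "(\<integral>\<omega>. F \<theta> \<omega> \<partial>M) = indicator {0..pi} \<theta> *\<^sub>R expectation (\<lambda>\<omega>. len (proj \<theta> ` GW_S \<rho> J0 X k \<omega>))" for \<theta>
    unfolding F_def h_def GW_S_SC conf_def by simp
  have "expectation (\<lambda>\<omega>. Fav (GW_S \<rho> J0 X k \<omega>)) = (\<integral>\<omega>. (\<integral>\<theta>. F \<theta> \<omega> \<partial>lborel) \<partial>M)"
    by (rule Bochner_Integration.integral_cong[OF refl]) (simp add: inner1)
  also have "\<dots> = (\<integral>\<theta>. (\<integral>\<omega>. F \<theta> \<omega> \<partial>M) \<partial>lborel)"
    by (rule P.Fubini_integral[OF intF])
  also have "\<dots> = (LINT \<theta>:{0..pi}|lborel. expectation (\<lambda>\<omega>. len (proj \<theta> ` GW_S \<rho> J0 X k \<omega>)))"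
    unfolding inner2 set_lebesgue_integral_def ..
  finally show "expectation (\<lambda>\<omega>. Fav (GW_S \<rho> J0 X k \<omega>))
           = (LINT \<theta>:{0..pi}|lborel. expectation (\<lambda>\<omega>. len (proj \<theta> ` GW_S \<rho> J0 X k \<omega>)))" .
  have "integrable lborel (\<lambda>\<theta>. \<integral>\<omega>. F \<theta> \<omega> \<partial>M)"
    using P.integrable_fst'[OF intF] by simp
  then show "set_integrable lborel {0..pi} (\<lambda>\<theta>. expectation (\<lambda>\<omega>. len (proj \<theta> ` GW_S \<rho> J0 X k \<omega>)))"
    unfolding set_integrable_def inner2 .
qed

end

theorem lemma3p3:
  fixes M :: "'w measure"
    and X :: "nat list \<Rightarrow> 'w \<Rightarrow> nat \<times> (nat \<Rightarrow> pt)"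
    and J0 :: "pt set" and \<rho> :: real
  assumes "prob_space M"
    and "compact J0" and "closure (interior J0) = J0" and "finite (components J0)"
    and "0 < \<rho>" and "\<rho> < 1"
    and "\<And>p. X p \<in> measurable M offspringM"
    and "prob_space.indep_vars M (\<lambda>_. offspringM) X UNIV"
    and "\<And>p. distr M offspringM (X p) = distr M offspringM (X [])"
    and "\<exists>B. \<forall>p. \<forall>\<omega>\<in>space M. fst (X p \<omega>) \<le> B"
    and "\<And>p \<omega> i. \<omega> \<in> space M \<Longrightarrow> i < fst (X p \<omega>) \<Longrightarrow> hom \<rho> (snd (X p \<omega>) i) ` J0 \<subseteq> J0"
    and "prob_space.expectation M (\<lambda>\<omega>. real (fst (X [] \<omega>))) = 1 / \<rho>"
  defines "\<mu>\<theta> \<equiv> \<lambda>n \<theta>. prob_space.expectation M (\<lambda>\<omega>. len (proj \<theta> ` GW_S \<rho> J0 X n \<omega>))"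
    and "\<mu> \<equiv> \<lambda>n. prob_space.expectation M (\<lambda>\<omega>. Fav (GW_S \<rho> J0 X n \<omega>))"
  shows "(\<forall>\<theta>. \<forall>n\<ge>1. \<mu>\<theta> n \<theta> - \<mu>\<theta> (n + 1) \<theta> \<le> \<mu>\<theta> (n - 1) \<theta> - \<mu>\<theta> n \<theta>)
       \<and> (\<forall>n\<ge>1. \<mu> n - \<mu> (n + 1) \<le> \<mu> (n - 1) - \<mu> n)"
proof -
  interpret prob_space M by (rule assms(1))
  obtain B where B: "\<And>p \<omega>. \<omega> \<in> space M \<Longrightarrow> fst (X p \<omega>) \<le> B" using assms(10) by blast
  have conv: "\<mu>\<theta> (Suc m) \<theta> - \<mu>\<theta> (Suc (Suc m)) \<theta> \<le> \<mu>\<theta> m \<theta> - \<mu>\<theta> (Suc m) \<theta>" for m \<theta>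
    unfolding \<mu>\<theta>_def
    by (rule theta_convex[OF assms(2,5,7,9,8) B assms(11,12)])
  have P1: "\<forall>\<theta>. \<forall>n\<ge>1. \<mu>\<theta> n \<theta> - \<mu>\<theta> (n + 1) \<theta> \<le> \<mu>\<theta> (n - 1) \<theta> - \<mu>\<theta> n \<theta>"
  proof (intro allI impI)
    fix \<theta> and n :: nat assume "1 \<le> n"
    then obtain m where n: "n = Suc m" by (cases n) auto
    show "\<mu>\<theta> n \<theta> - \<mu>\<theta> (n + 1) \<theta> \<le> \<mu>\<theta> (n - 1) \<theta> - \<mu>\<theta> n \<theta>"
      using conv[of m \<theta>] unfolding n by simp
  qed
  have rep: "\<mu> k = (LINT \<theta>:{0..pi}|lborel. \<mu>\<theta> k \<theta>)" for k
    unfolding \<mu>_def \<mu>\<theta>_def by (rule mu_rep(1)[OF assms(2,5,7,11)])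
  have si: "set_integrable lborel {0..pi} (\<mu>\<theta> k)" for k
    unfolding \<mu>\<theta>_def by (rule mu_rep(2)[OF assms(2,5,7,11)])
  have P2: "\<forall>n\<ge>1. \<mu> n - \<mu> (n + 1) \<le> \<mu> (n - 1) - \<mu> n"
  proof (intro allI impI)
    fix n :: nat assume "1 \<le> n"
    have "\<mu> n - \<mu> (n + 1) = (LINT \<theta>:{0..pi}|lborel. \<mu>\<theta> n \<theta> - \<mu>\<theta> (n + 1) \<theta>)"
      unfolding rep using si by (simp add: set_integral_diff(2))
    also have "\<dots> \<le> (LINT \<theta>:{0..pi}|lborel. \<mu>\<theta> (n - 1) \<theta> - \<mu>\<theta> n \<theta>)"
      using si P1 \<open>1 \<le> n\<close> by (intro set_integral_mono set_integral_diff(1)) auto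
    also have "\<dots> = \<mu> (n - 1) - \<mu> n"
      unfolding rep using si by (simp add: set_integral_diff(2))
    finally show "\<mu> n - \<mu> (n + 1) \<le> \<mu> (n - 1) - \<mu> n" .
  qed
  from P1 P2 show ?thesis by blast
qed

end
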